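(* The relation $\preceq_{d+1}$ is a partial order on the set of simplices on $\gamma_d$.
   Context: $\gamma_d=\{(t,t^2,\dots,t^d):t\in\mathbb{R}\}$. A simplex on $\gamma_d$ is a finite subset $\sigma\subseteq\gamma_d$ with $|\sigma|\le d+1$, identified with $\mathrm{conv}(\sigma)$. Simplices overlap in $\mathbb{R}^d$ if $\mathrm{conv}(\sigma)\cap\mathrm{conv}(\tau)\supsetneq\mathrm{conv}(\sigma\cap\tau)$. For $\sigma=\{\gamma_d(t_1),\dots,\gamma_d(t_k)\}$ the lifting is $\hat\sigma=\{\gamma_{d+1}(t_i)\}$ and the height function $h_\sigma:\mathrm{conv}(\sigma)\to\mathbb{R}$ assigns to $p$ the last coordinate of the point of $\mathrm{conv}(\hat\sigma)$ projecting to $p$. Write $\sigma<_{d+1}\tau$ if $\sigma,\tau$ overlap in $\mathbb{R}^d$ and $h_\sigma\le h_\tau$ on $\mathrm{conv}(\sigma)\cap\mathrm{conv}(\tau)$. Define $\sigma\preceq_{d+1}\tau$ if $\sigma=\tau$ or there exist $k\ge1$ and simplices $\sigma=\sigma_0<_{d+1}\sigma_1<_{d+1}\dots<_{d+1}\sigma_k=\tau$ on $\gamma_d$. *)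

theory Defs
  imports Main "HOL-Analysis.Analysis"
begin

text \<open>Points of R^d are encoded as functions nat => real whose coordinates
  1..d are the Euclidean coordinates (all other coordinates are 0).\<close>

definition gamma :: "nat \<Rightarrow> real \<Rightarrow> (nat \<Rightarrow> real)" where
  "gamma d t = (\<lambda>i. if 1 \<le> i \<and> i \<le> d then t ^ i else 0)"

definition conv :: "(nat \<Rightarrow> real) set \<Rightarrow> (nat \<Rightarrow> real) set" where
  "conv S = {p. \<exists>u. (\<forall>x\<in>S. 0 \<le> u x) \<and> (\<Sum>x\<in>S. u x) = 1 \<and>
                     p = (\<lambda>i. \<Sum>x\<in>S. u x * x i)}"

definition simplices :: "nat \<Rightarrow> (nat \<Rightarrow> real) set set" where
  "simplices d = {\<sigma>. finite \<sigma> \<and> \<sigma> \<subseteq> range (gamma d) \<and> card \<sigma> \<le> d + 1}"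

definition overlap :: "(nat \<Rightarrow> real) set \<Rightarrow> (nat \<Rightarrow> real) set \<Rightarrow> bool" where
  "overlap \<sigma> \<tau> \<longleftrightarrow> conv (\<sigma> \<inter> \<tau>) \<subset> conv \<sigma> \<inter> conv \<tau>"

definition lift :: "nat \<Rightarrow> (nat \<Rightarrow> real) \<Rightarrow> (nat \<Rightarrow> real)" where
  "lift d p = gamma (d + 1) (THE t. p = gamma d t)"

definition proj :: "nat \<Rightarrow> (nat \<Rightarrow> real) \<Rightarrow> (nat \<Rightarrow> real)" where
  "proj d q = (\<lambda>i. if i \<le> d then q i else 0)"

definition height :: "nat \<Rightarrow> (nat \<Rightarrow> real) set \<Rightarrow> (nat \<Rightarrow> real) \<Rightarrow> real" where
  "height d \<sigma> p = (THE y. \<exists>q\<in>conv (lift d ` \<sigma>). proj d q = p \<and> q (d + 1) = y)"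

definition below :: "nat \<Rightarrow> (nat \<Rightarrow> real) set \<Rightarrow> (nat \<Rightarrow> real) set \<Rightarrow> bool" where
  "below d \<sigma> \<tau> \<longleftrightarrow> overlap \<sigma> \<tau> \<and>
     (\<forall>p\<in>conv \<sigma> \<inter> conv \<tau>. height d \<sigma> p \<le> height d \<tau> p)"

definition preceq :: "nat \<Rightarrow> (nat \<Rightarrow> real) set \<Rightarrow> (nat \<Rightarrow> real) set \<Rightarrow> bool" where
  "preceq d \<sigma> \<tau> \<longleftrightarrow> \<sigma> = \<tau> \<or>
     tranclp (\<lambda>a b. a \<in> simplices d \<and> b \<in> simplices d \<and> below d a b) \<sigma> \<tau>"

end

theory Submission
  imports Defs "HOL-Computational_Algebra.Polynomial"
begin

lemma lagrange_coeff:
  fixes Z :: "real set" and p :: "real poly"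
  assumes fin: "finite Z" and cZ: "card Z = Suc n" and dp: "degree p \<le> n"
  shows "(\<Sum>z\<in>Z. poly p z / (\<Prod>w\<in>Z-{z}. z - w)) = coeff p n"
proof -
  define D where "D z = (\<Prod>w\<in>Z-{z}. z - w)" for z
  define L where "L z = (\<Prod>w\<in>Z-{z}. [:-w, 1:])" for z
  define q where "q = (\<Sum>z\<in>Z. smult (poly p z / D z) (L z))"
  have Dnz: "D z \<noteq> 0" if "z \<in> Z" for z
    unfolding D_def using fin by (subst prod_zero_iff) auto
  have polyL: "poly (L z) x = (\<Prod>w\<in>Z-{z}. x - w)" for z x
    unfolding L_def by (simp add: poly_prod)
  have degL: "degree (L z) = n" if "z \<in> Z" for z
  proof -
    have "degree (L z) = (\<Sum>w\<in>Z-{z}. degree [:-w, 1::real:])"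
      unfolding L_def by (rule degree_prod_eq_sum_degree) auto
    also have "\<dots> = card (Z - {z})" by simp
    also have "\<dots> = n" using cZ that fin by simp
    finally show ?thesis .
  qed
  have lcL: "coeff (L z) n = 1" if "z \<in> Z" for z
  proof -
    have "lead_coeff (L z) = (\<Prod>w\<in>Z-{z}. lead_coeff [:-w, 1::real:])"
      unfolding L_def by (rule lead_coeff_prod)
    then show ?thesis using degL[OF that] by simp
  qed
  have degq: "degree q \<le> n"
    unfolding q_def
    by (rule degree_sum_le[OF fin]) (use degL degree_smult_le order_trans in metis)
  have agree: "poly q x = poly p x" if "x \<in> Z" for x
  proof -
    have "poly q x = (\<Sum>z\<in>Z. poly p z / D z * poly (L z) x)"
      unfolding q_def by (simp add: poly_sum)
    also have "\<dots> = poly p x / D x * poly (L x) x + (\<Sum>z\<in>Z-{x}. poly p z / D z * poly (L z) x)"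
      using fin that by (simp add: sum.remove)
    also have "(\<Sum>z\<in>Z-{x}. poly p z / D z * poly (L z) x) = 0"
    proof (rule sum.neutral, rule ballI)
      fix z assume "z \<in> Z - {x}"
      then have "poly (L z) x = 0" unfolding polyL using fin that
        by (subst prod_zero_iff) auto
      then show "poly p z / D z * poly (L z) x = 0" by simp
    qed
    also have "poly (L x) x = D x" unfolding polyL D_def ..
    finally show ?thesis using Dnz[OF that] by simp
  qed
  have "p - q = 0"
  proof (rule ccontr)
    assume nz: "p - q \<noteq> 0"
    have "Z \<subseteq> {x. poly (p - q) x = 0}" using agree by auto
    moreover have "finite {x. poly (p - q) x = 0}" using nz by (rule poly_roots_finite)
    ultimately have "card Z \<le> card {x. poly (p - q) x = 0}" by (rule card_mono[rotated])
    also have "\<dots> \<le> degree (p - q)" using nz by (rule card_poly_roots_bound)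
    also have "\<dots> \<le> n" using dp degq by (meson degree_diff_le)
    finally show False using cZ by simp
  qed
  then have "p = q" by simp
  then have "coeff p n = coeff q n" by simp
  also have "\<dots> = (\<Sum>z\<in>Z. poly p z / D z * coeff (L z) n)"
    unfolding q_def by (simp add: coeff_sum)
  also have "\<dots> = (\<Sum>z\<in>Z. poly p z / D z)" using lcL by simp
  finally show ?thesis unfolding D_def by simp
qed

lemma divdiff_moment:
  fixes Z :: "real set"
  assumes fin: "finite Z" and cZ: "card Z = Suc n" and k: "k \<le> n"
  shows "(\<Sum>z\<in>Z. z ^ k / (\<Prod>w\<in>Z-{z}. z - w)) = (if k = n then 1 else 0)"
proof -
  have "(\<Sum>z\<in>Z. poly (monom 1 k) z / (\<Prod>w\<in>Z-{z}. z - w)) = coeff (monom (1::real) k) n"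
    by (rule lagrange_coeff[OF fin cZ]) (simp add: degree_monom_eq k)
  then show ?thesis by (simp add: poly_monom coeff_monom)
qed

lemma sign_D:
  fixes Z :: "real set"
  assumes fin: "finite Z" and z: "z \<in> Z"
  shows "(-1) ^ card {w\<in>Z. z < w} * (\<Prod>w\<in>Z-{z}. z - w) > 0"
proof -
  define A where "A = {w\<in>Z. z < w}"
  define B where "B = {w\<in>Z. w < z}"
  have split: "Z - {z} = A \<union> B" "A \<inter> B = {}" unfolding A_def B_def by auto
  have fA: "finite A" "finite B" using fin unfolding A_def B_def by auto
  have "(\<Prod>w\<in>Z-{z}. z - w) = (\<Prod>w\<in>A. z - w) * (\<Prod>w\<in>B. z - w)"
    unfolding split(1) by (rule prod.union_disjoint[OF fA split(2)])
  moreover have "(\<Prod>w\<in>A. z - w) = (-1) ^ card A * (\<Prod>w\<in>A. (w - z))"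
  proof -
    have "(\<Prod>w\<in>A. z - w) = (\<Prod>w\<in>A. (-1) * (w - z))" by simp
    also have "\<dots> = (-1) ^ card A * (\<Prod>w\<in>A. (w - z))" by (subst prod.distrib) simp
    finally show ?thesis .
  qed
  moreover have "(\<Prod>w\<in>A. (w - z)) > 0" by (rule prod_pos) (auto simp: A_def)
  moreover have "(\<Prod>w\<in>B. (z - w)) > 0" by (rule prod_pos) (auto simp: B_def)
  moreover have "(-1::real) ^ card A * (-1) ^ card A = 1"
    by (metis power_add power_minus1_even add_diff_cancel_left' mult_2 even_add)
  ultimately show ?thesis unfolding A_def[symmetric]
    by (metis (no_types, lifting) mult.assoc mult.left_commute mult_1 mult_pos_pos)
qed


definition chain :: "(real \<Rightarrow> real) \<Rightarrow> real set \<Rightarrow> (nat \<Rightarrow> real) \<Rightarrow> nat \<Rightarrow> bool" where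
  "chain \<mu> V c n \<longleftrightarrow> (\<forall>i<n. c i \<in> V) \<and>
     (\<forall>i. Suc i < n \<longrightarrow> c (Suc i) < c i \<and> \<mu> (c i) * \<mu> (c (Suc i)) < 0)"

lemma chain_mono:
  assumes "chain \<mu> V c n" "i < j" "j < n"
  shows "c j < c i"
  using assms(2,3)
proof (induction j)
  case 0 then show ?case by simp
next
  case (Suc j)
  have step: "c (Suc j) < c j" using assms(1) Suc.prems unfolding chain_def by blast
  show ?case
  proof (cases "i = j")
    case True then show ?thesis using step by simp
  next
    case False
    then have "c j < c i" using Suc by simp
    then show ?thesis using step by simp
  qed
qed

lemma chain_inj:
  assumes "chain \<mu> V c n"
  shows "inj_on c {..<n}"
proof (rule inj_onI)
  fix i j assume "i \<in> {..<n}" "j \<in> {..<n}" "c i = c j"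
  then show "i = j" using chain_mono[OF assms, of i j] chain_mono[OF assms, of j i]
    by (cases i j rule: linorder_cases) auto
qed

lemma chain_card:
  assumes "chain \<mu> V c n" "finite V"
  shows "n \<le> card V"
proof -
  have "c ` {..<n} \<subseteq> V" using assms(1) unfolding chain_def by auto
  then have "card (c ` {..<n}) \<le> card V" using assms(2) by (rule card_mono[rotated])
  moreover have "card (c ` {..<n}) = n" using chain_inj[OF assms(1)] by (simp add: card_image)
  ultimately show ?thesis by simp
qed

lemma sgn_helper1: "(x::real) * y > 0 \<Longrightarrow> y * z > 0 \<Longrightarrow> x * z > 0"
  by (auto simp: zero_less_mult_iff)
lemma sgn_helper2: "(x::real) * y > 0 \<Longrightarrow> y * z < 0 \<Longrightarrow> x * z < 0"
  by (auto simp: zero_less_mult_iff mult_less_0_iff)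

lemma sign_poly:
  fixes \<mu> :: "real \<Rightarrow> real"
  assumes "finite V" "V \<noteq> {}" "\<forall>x\<in>V. \<mu> x \<noteq> 0"
    "\<not>(\<exists>c. chain \<mu> V c (Suc (Suc k)) \<and> c 0 = Max V)"
  shows "\<exists>P. degree P \<le> k \<and> (\<forall>x\<in>V. poly P x * \<mu> x > 0) \<and>
              (\<forall>x \<ge> Max V. poly P x * \<mu> (Max V) > 0)"
  using assms
proof (induction k arbitrary: V)
  case (0 V)
  define a where "a = Max V"
  have aV: "a \<in> V" unfolding a_def using 0 by simp
  have all: "\<mu> x * \<mu> a > 0" if "x \<in> V" for x
  proof (rule ccontr)
    assume "\<not> \<mu> x * \<mu> a > 0"
    moreover have "\<mu> x * \<mu> a \<noteq> 0" using 0(3) that aV by simp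
    ultimately have "\<mu> x * \<mu> a < 0" by linarith
    then have neg: "\<mu> a * \<mu> x < 0" by (simp add: mult.commute)
    have "x \<le> a" unfolding a_def using 0 that by simp
    moreover have "x \<noteq> a" using neg by auto
    ultimately have "chain \<mu> V (\<lambda>i. if i = 0 then a else x) (Suc (Suc 0))"
      unfolding chain_def using aV that neg by auto
    then have "\<exists>c. chain \<mu> V c (Suc (Suc 0)) \<and> c 0 = Max V" using a_def
      by (intro exI[of _ "\<lambda>i. if i = 0 then a else x"]) simp
    then show False using 0(4) by blast
  qed
  show ?case
  proof (intro exI[of _ "[:sgn (\<mu> a):]"] conjI ballI allI impI)
    fix x assume "x \<in> V"
    then show "poly [:sgn (\<mu> a):] x * \<mu> x > 0" using all[of x]
      by (auto simp: sgn_real_def zero_less_mult_iff)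
  next
    fix x show "poly [:sgn (\<mu> a):] x * \<mu> (Max V) > 0" using 0(3) aV a_def
      by (auto simp: sgn_real_def zero_less_mult_iff)
  qed simp
next
  case (Suc k V)
  define a where "a = Max V"
  have aV: "a \<in> V" unfolding a_def using Suc by simp
  define T where "T = {x\<in>V. \<mu> x * \<mu> a < 0}"
  show ?case
  proof (cases "T = {}")
    case True
    have all: "\<mu> x * \<mu> a > 0" if "x \<in> V" for x
    proof -
      have "\<mu> x * \<mu> a \<noteq> 0" using Suc.prems(3) that aV by simp
      moreover have "\<not> \<mu> x * \<mu> a < 0" using True that unfolding T_def by auto
      ultimately show ?thesis by linarith
    qed
    show ?thesis
    proof (intro exI[of _ "[:sgn (\<mu> a):]"] conjI ballI allI impI)
      fix x assume "x \<in> V"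
      then show "poly [:sgn (\<mu> a):] x * \<mu> x > 0" using all[of x]
        by (auto simp: sgn_real_def zero_less_mult_iff)
    next
      fix x show "poly [:sgn (\<mu> a):] x * \<mu> (Max V) > 0" using Suc.prems(3) aV a_def
        by (auto simp: sgn_real_def zero_less_mult_iff)
    qed simp
  next
    case False
    have finT: "finite T" using Suc.prems(1) unfolding T_def by simp
    define b where "b = Max T"
    have bT: "b \<in> T" unfolding b_def using finT False by simp
    then have bV: "b \<in> V" and bneg: "\<mu> b * \<mu> a < 0" unfolding T_def by auto
    have "b \<le> a" unfolding a_def using Suc.prems(1) bV by simp
    moreover have "b \<noteq> a" using bneg by (metis mult_less_0_iff not_square_less_zero)
    ultimately have ba: "b < a" by simp
    define Vb where "Vb = {x\<in>V. x \<le> b}"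
    have finVb: "finite Vb" using Suc.prems(1) unfolding Vb_def by simp
    have bVb: "b \<in> Vb" unfolding Vb_def using bV by simp
    have MaxVb: "Max Vb = b"
      by (rule Max_eqI[OF finVb]) (auto simp: Vb_def bV)
    have nochain: "\<not>(\<exists>c. chain \<mu> Vb c (Suc (Suc k)) \<and> c 0 = Max Vb)"
    proof
      assume "\<exists>c. chain \<mu> Vb c (Suc (Suc k)) \<and> c 0 = Max Vb"
      then obtain c where c: "chain \<mu> Vb c (Suc (Suc k))" "c 0 = b" using MaxVb by auto
      define c' where "c' i = (if i = 0 then a else c (i - 1))" for i
      have "chain \<mu> V c' (Suc (Suc (Suc k)))"
        unfolding chain_def
      proof (rule conjI; intro allI impI)
        fix i assume "i < Suc (Suc (Suc k))"
        then show "c' i \<in> V" using c(1) aV unfolding chain_def c'_def Vb_def by auto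
      next
        fix i assume i: "Suc i < Suc (Suc (Suc k))"
        show "c' (Suc i) < c' i \<and> \<mu> (c' i) * \<mu> (c' (Suc i)) < 0"
        proof (cases i)
          case 0 then show ?thesis using c(2) ba bneg by (simp add: c'_def mult.commute)
        next
          case (Suc j)
          then show ?thesis using c(1) i unfolding chain_def c'_def by auto
        qed
      qed
      moreover have "c' 0 = Max V" unfolding c'_def a_def by simp
      ultimately show False using Suc.prems(4) by blast
    qed
    obtain P0 where P0: "degree P0 \<le> k" "\<forall>x\<in>Vb. poly P0 x * \<mu> x > 0"
      "\<forall>x \<ge> b. poly P0 x * \<mu> b > 0"
      using Suc.IH[OF finVb _ _ nochain] bVb Suc.prems(3) MaxVb unfolding Vb_def by auto
    define Ab where "Ab = {x\<in>V. b < x}"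
    have finAb: "finite Ab" "Ab \<noteq> {}" using Suc.prems(1) aV ba unfolding Ab_def by auto
    define m where "m = Min Ab"
    have mAb: "m \<in> Ab" unfolding m_def using finAb by simp
    then have bm: "b < m" unfolding Ab_def by simp
    have ma: "m \<le> a" unfolding m_def using finAb aV ba by (simp add: Ab_def)
    define c0 where "c0 = (b + m) / 2"
    have c0: "b < c0" "c0 < m" unfolding c0_def using bm by auto
    define P where "P = [:c0, -1:] * P0"
    have polyP: "poly P x = (c0 - x) * poly P0 x" for x unfolding P_def by (simp add: algebra_simps)
    have P0a: "poly P0 x * \<mu> a < 0" if "x \<ge> b" for x
      using sgn_helper2[OF P0(3)[rule_format, OF that] bneg] .
    show ?thesis
    proof (intro exI[of _ P] conjI ballI allI impI)
      show "degree P \<le> Suc k" unfolding P_def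
        using degree_mult_le[of "[:c0, -1:]" P0] P0(1) by simp
    next
      fix x assume xV: "x \<in> V"
      show "poly P x * \<mu> x > 0"
      proof (cases "x \<le> b")
        case True
        then have "poly P0 x * \<mu> x > 0" using P0(2) xV unfolding Vb_def by simp
        moreover have "c0 - x > 0" using True c0 by simp
        ultimately show ?thesis unfolding polyP by (simp add: mult.assoc)
      next
        case False
        then have "x \<in> Ab" unfolding Ab_def using xV by simp
        then have "m \<le> x" unfolding m_def using finAb by simp
        then have cx: "c0 - x < 0" using c0 by simp
        have "x \<notin> T"
        proof
          assume "x \<in> T"
          then have "x \<le> b" unfolding b_def using finT by simp
          then show False using False by simp
        qed
        then have "\<mu> x * \<mu> a \<ge> 0" using xV unfolding T_def by simp
        then have xa: "\<mu> x * \<mu> a > 0" using Suc.prems(3) xV aV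
          by (simp add: order_le_less)
        have "poly P0 x * \<mu> x < 0"
        proof -
          have "\<mu> a * poly P0 x < 0" using P0a[of x] False by (simp add: mult.commute)
          from sgn_helper2[OF xa this] show ?thesis by (simp add: mult.commute)
        qed
        then show ?thesis unfolding polyP using cx by (simp add: mult.assoc mult_neg_neg)
      qed
    next
      fix x assume x: "Max V \<le> x"
      then have cx: "c0 - x < 0" using c0 ma a_def by simp
      have "poly P0 x * \<mu> a < 0" using P0a x ba a_def by simp
      then show "poly P x * \<mu> (Max V) > 0" unfolding polyP a_def[symmetric]
        using cx by (simp add: mult.assoc mult_neg_neg)
    qed
  qed
qed

lemma chain_exists:
  fixes \<mu> :: "real \<Rightarrow> real"
  assumes fin: "finite V" and ne: "V \<noteq> {}" and nz: "\<forall>x\<in>V. \<mu> x \<noteq> 0"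
    and mom: "\<forall>k\<le>d. (\<Sum>x\<in>V. \<mu> x * x ^ k) = 0"
  shows "\<exists>c. chain \<mu> V c (Suc (Suc d))"
proof (rule ccontr)
  assume "\<not> ?thesis"
  then obtain P where P: "degree P \<le> d" "\<forall>x\<in>V. poly P x * \<mu> x > 0"
    using sign_poly[OF fin ne nz, of d] by blast
  have "(\<Sum>x\<in>V. poly P x * \<mu> x) > 0" using P(2) fin ne by (intro sum_pos) auto
  moreover have "(\<Sum>x\<in>V. poly P x * \<mu> x) = 0"
  proof -
    have e: "poly P x * \<mu> x = (\<Sum>i\<le>degree P. coeff P i * (\<mu> x * x ^ i))" for x
      unfolding poly_altdef sum_distrib_right by (simp add: mult_ac)
    have "(\<Sum>x\<in>V. poly P x * \<mu> x) = (\<Sum>x\<in>V. \<Sum>i\<le>degree P. coeff P i * (\<mu> x * x ^ i))"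
      by (rule sum.cong[OF refl e])
    also have "\<dots> = (\<Sum>i\<le>degree P. coeff P i * (\<Sum>x\<in>V. \<mu> x * x ^ i))"
      by (subst sum.swap) (simp add: sum_distrib_left)
    also have "\<dots> = 0" using mom P(1) by (intro sum.neutral) auto
    finally show ?thesis .
  qed
  ultimately show False by simp
qed

lemma vandermonde:
  fixes f :: "real \<Rightarrow> real"
  assumes fin: "finite S" and cS: "card S \<le> Suc d"
    and mom: "\<forall>k\<le>d. (\<Sum>s\<in>S. f s * s ^ k) = 0"
  shows "\<forall>s\<in>S. f s = 0"
proof (rule ccontr)
  assume nt: "\<not> (\<forall>s\<in>S. f s = 0)"
  define V where "V = {s\<in>S. f s \<noteq> 0}"
  have finV: "finite V" using fin unfolding V_def by simp
  have neV: "V \<noteq> {}" using nt unfolding V_def by auto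
  have "\<forall>k\<le>d. (\<Sum>x\<in>V. f x * x ^ k) = 0"
  proof (intro allI impI)
    fix k assume "k \<le> d"
    have "(\<Sum>x\<in>V. f x * x ^ k) = (\<Sum>x\<in>S. f x * x ^ k)"
      by (rule sum.mono_neutral_left[OF fin]) (auto simp: V_def)
    then show "(\<Sum>x\<in>V. f x * x ^ k) = 0" using mom \<open>k \<le> d\<close> by simp
  qed
  moreover have "\<forall>x\<in>V. f x \<noteq> 0" unfolding V_def by simp
  ultimately obtain c where "chain f V c (Suc (Suc d))"
    using chain_exists[OF finV neV] by blast
  then have "Suc (Suc d) \<le> card V" using finV by (rule chain_card)
  moreover have "card V \<le> card S" using fin unfolding V_def by (intro card_mono) auto
  ultimately show False using cS by simp
qed


definition pset :: "nat \<Rightarrow> (nat \<Rightarrow> real) set \<Rightarrow> real set" where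
  "pset d \<sigma> = {t. gamma d t \<in> \<sigma>}"

lemma gamma_1: "d \<ge> 1 \<Longrightarrow> gamma d s 1 = s"
  by (simp add: gamma_def)

lemma gamma_inj: "d \<ge> 1 \<Longrightarrow> inj (gamma d)"
  by (rule injI) (metis gamma_1)

lemma simplex_param:
  assumes d: "d \<ge> 1" and s: "\<sigma> \<in> simplices d"
  shows "finite (pset d \<sigma>)" "\<sigma> = gamma d ` pset d \<sigma>" "card (pset d \<sigma>) \<le> Suc d"
proof -
  have fin: "finite \<sigma>" and sub: "\<sigma> \<subseteq> range (gamma d)" and c: "card \<sigma> \<le> d + 1"
    using s unfolding simplices_def by auto
  show eq: "\<sigma> = gamma d ` pset d \<sigma>" using sub unfolding pset_def by auto
  show "finite (pset d \<sigma>)" unfolding pset_def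
    using finite_vimageI[OF fin gamma_inj[OF d]] by (simp add: vimage_def)
  then have "card (gamma d ` pset d \<sigma>) = card (pset d \<sigma>)"
    using gamma_inj[OF d] by (simp add: card_image inj_on_def inj_def)
  then show "card (pset d \<sigma>) \<le> Suc d" using c eq by simp
qed

lemma conv_img:
  assumes inj: "inj g" and fin: "finite S"
  shows "conv (g ` S) = {p. \<exists>u. (\<forall>s\<in>S. 0 \<le> u s) \<and> sum u S = 1 \<and>
                          p = (\<lambda>i. \<Sum>s\<in>S. u s * g s i)}"
proof -
  have inj': "inj_on g S" using inj by (simp add: inj_on_def inj_def)
  show ?thesis
  proof (intro set_eqI iffI)
    fix p assume "p \<in> conv (g ` S)"
    then obtain u where u: "\<forall>x\<in>g ` S. 0 \<le> u x" "(\<Sum>x\<in>g ` S. u x) = 1"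
      "p = (\<lambda>i. \<Sum>x\<in>g ` S. u x * x i)" unfolding conv_def by auto
    show "p \<in> {p. \<exists>u. (\<forall>s\<in>S. 0 \<le> u s) \<and> sum u S = 1 \<and> p = (\<lambda>i. \<Sum>s\<in>S. u s * g s i)}"
      using u by (intro CollectI exI[of _ "u \<circ> g"]) (simp add: sum.reindex[OF inj'])
  next
    fix p assume "p \<in> {p. \<exists>u. (\<forall>s\<in>S. 0 \<le> u s) \<and> sum u S = 1 \<and> p = (\<lambda>i. \<Sum>s\<in>S. u s * g s i)}"
    then obtain u where u: "\<forall>s\<in>S. 0 \<le> u s" "sum u S = 1" "p = (\<lambda>i. \<Sum>s\<in>S. u s * g s i)"
      by auto
    define u' where "u' = u \<circ> inv g"
    have u'g: "u' (g s) = u s" for s unfolding u'_def using inj by simp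
    show "p \<in> conv (g ` S)" unfolding conv_def
      using u by (intro CollectI exI[of _ u']) (simp add: sum.reindex[OF inj'] u'g)
  qed
qed

lemma gamma_sum:
  "(\<lambda>i. \<Sum>s\<in>S. u s * gamma d s i) = (\<lambda>i. if 1 \<le> i \<and> i \<le> d then \<Sum>s\<in>S. u s * s ^ i else 0)"
  by (rule ext) (auto simp: gamma_def)

lemma lift_gamma:
  assumes "d \<ge> 1" shows "lift d (gamma d s) = gamma (d + 1) s"
proof -
  have "(THE t. gamma d s = gamma d t) = s"
    by (rule the_equality) (auto dest: injD[OF gamma_inj[OF assms]])
  then show ?thesis unfolding lift_def by simp
qed

lemma height_eq:
  assumes d: "d \<ge> 1" and fin: "finite S" and cS: "card S \<le> Suc d"
    and u: "\<forall>s\<in>S. 0 \<le> u s" "sum u S = 1"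
  shows "height d (gamma d ` S) (\<lambda>i. \<Sum>s\<in>S. u s * gamma d s i) = (\<Sum>s\<in>S. u s * s ^ (d + 1))"
proof -
  have liftS: "lift d ` gamma d ` S = gamma (d + 1) ` S"
    using lift_gamma[OF d] by (simp add: image_image)
  have d1: "d + 1 \<ge> 1" by simp
  have convL: "conv (lift d ` gamma d ` S) = {p. \<exists>u. (\<forall>s\<in>S. 0 \<le> u s) \<and> sum u S = 1 \<and>
                          p = (\<lambda>i. \<Sum>s\<in>S. u s * gamma (d + 1) s i)}"
    unfolding liftS by (rule conv_img[OF gamma_inj[OF d1] fin])
  define p where "p = (\<lambda>i. \<Sum>s\<in>S. u s * gamma d s i)"
  define q where "q = (\<lambda>i. \<Sum>s\<in>S. u s * gamma (d + 1) s i)"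
  have projq: "proj d q = p"
    unfolding proj_def q_def p_def gamma_sum by (rule ext) auto
  have q1: "q (d + 1) = (\<Sum>s\<in>S. u s * s ^ (d + 1))" unfolding q_def gamma_sum by simp
  show ?thesis
    unfolding height_def p_def[symmetric]
  proof (rule the_equality)
    show "\<exists>q\<in>conv (lift d ` gamma d ` S). proj d q = p \<and> q (d + 1) = (\<Sum>s\<in>S. u s * s ^ (d + 1))"
      using projq q1 u unfolding convL q_def by blast
  next
    fix y assume "\<exists>q\<in>conv (lift d ` gamma d ` S). proj d q = p \<and> q (d + 1) = y"
    then obtain q' where q': "q' \<in> conv (lift d ` gamma d ` S)" "proj d q' = p" "q' (d + 1) = y"
      by blast
    from q'(1) obtain u' where u'0: "\<forall>s\<in>S. 0 \<le> u' s" "sum u' S = 1"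
      "q' = (\<lambda>i. \<Sum>s\<in>S. u' s * gamma (d + 1) s i)"
      unfolding convL by blast
    have u': "\<forall>s\<in>S. 0 \<le> u' s" "sum u' S = 1"
      "proj d (\<lambda>i. \<Sum>s\<in>S. u' s * gamma (d + 1) s i) = p"
      "y = (\<Sum>s\<in>S. u' s * s ^ (d + 1))"
      using u'0 q'(2,3) by (auto simp: gamma_sum)
    have "\<forall>k\<le>d. (\<Sum>s\<in>S. (u' s - u s) * s ^ k) = 0"
    proof (intro allI impI)
      fix k assume k: "k \<le> d"
      show "(\<Sum>s\<in>S. (u' s - u s) * s ^ k) = 0"
      proof (cases "k = 0")
        case True then show ?thesis using u u' by (simp add: sum_subtractf)
      next
        case False
        have "proj d (\<lambda>i. \<Sum>s\<in>S. u' s * gamma (d + 1) s i) k = p k" using u'(3) by simp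
        then have "(\<Sum>s\<in>S. u' s * s ^ k) = (\<Sum>s\<in>S. u s * s ^ k)"
          using k False unfolding proj_def p_def gamma_sum by simp
        then show ?thesis by (simp add: sum_subtractf left_diff_distrib)
      qed
    qed
    then have "\<forall>s\<in>S. u' s - u s = 0" by (rule vandermonde[OF fin cS])
    then show "y = (\<Sum>s\<in>S. u s * s ^ (d + 1))" using u'(4) by simp
  qed
qed


definition adm :: "nat \<Rightarrow> real set \<Rightarrow> real set \<Rightarrow> real set \<Rightarrow> (real \<Rightarrow> real) \<Rightarrow> bool" where
  "adm d S R Y \<nu> \<longleftrightarrow> finite Y \<and> Y \<subseteq> S \<union> R \<and>
     (\<forall>y\<in>Y. (\<nu> y > 0 \<longrightarrow> y \<in> R) \<and> (\<nu> y < 0 \<longrightarrow> y \<in> S)) \<and>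
     (\<forall>k\<le>d. (\<Sum>y\<in>Y. \<nu> y * y ^ k) = 0)"

lemma sum_restrict:
  assumes "finite S" "finite Y" "\<forall>y\<in>Y - S. g y = 0"
  shows "(\<Sum>s\<in>S. (if s \<in> Y then g s else 0)) = (\<Sum>y\<in>Y. g y)"
proof -
  have "(\<Sum>s\<in>S. (if s \<in> Y then g s else 0)) = (\<Sum>s\<in>S \<inter> Y. g s)"
    using assms(1) by (simp add: sum.inter_restrict)
  also have "\<dots> = (\<Sum>y\<in>Y. g y)"
    by (rule sum.mono_neutral_left) (use assms in auto)
  finally show ?thesis .
qed

lemma below_adm:
  assumes d: "d \<ge> 1" and finS: "finite S" and finR: "finite R"
    and cS: "card S \<le> Suc d" and cR: "card R \<le> Suc d"
    and bel: "below d (gamma d ` S) (gamma d ` R)"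
  shows "(\<exists>Y \<nu>. adm d S R Y \<nu> \<and> (\<exists>y\<in>Y. \<nu> y \<noteq> 0))"
    and "(\<forall>Y \<nu>. adm d S R Y \<nu> \<longrightarrow> (\<Sum>y\<in>Y. \<nu> y * y ^ (d + 1)) \<ge> 0)"
proof -
  note inj = gamma_inj[OF d]
  note cS' = conv_img[OF inj finS] and cR' = conv_img[OF inj finR]
  have ov: "overlap (gamma d ` S) (gamma d ` R)" and hle:
    "\<forall>p\<in>conv (gamma d ` S) \<inter> conv (gamma d ` R).
        height d (gamma d ` S) p \<le> height d (gamma d ` R) p"
    using bel unfolding below_def by auto
  show "\<exists>Y \<nu>. adm d S R Y \<nu> \<and> (\<exists>y\<in>Y. \<nu> y \<noteq> 0)"
  proof -
    have "gamma d ` S \<inter> gamma d ` R = gamma d ` (S \<inter> R)"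
      using inj by (simp add: image_Int)
    then obtain p where p: "p \<in> conv (gamma d ` S)" "p \<in> conv (gamma d ` R)"
      "p \<notin> conv (gamma d ` (S \<inter> R))"
      using ov unfolding overlap_def by auto
    from p(1) obtain u where u: "\<forall>s\<in>S. 0 \<le> u s" "sum u S = 1" "p = (\<lambda>i. \<Sum>s\<in>S. u s * gamma d s i)"
      unfolding cS' by blast
    from p(2) obtain w where w: "\<forall>s\<in>R. 0 \<le> w s" "sum w R = 1" "p = (\<lambda>i. \<Sum>s\<in>R. w s * gamma d s i)"
      unfolding cR' by blast
    define Y where "Y = S \<union> R"
    define \<nu> where "\<nu> y = (if y \<in> R then w y else 0) - (if y \<in> S then u y else 0)" for y
    have finY: "finite Y" unfolding Y_def using finS finR by simp
    have sR: "(\<Sum>y\<in>Y. (if y \<in> R then f y else 0)) = (\<Sum>y\<in>R. f y)" for f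
      unfolding Y_def using finS finR by (simp add: sum.inter_restrict[symmetric] Int_absorb1)
    have sS: "(\<Sum>y\<in>Y. (if y \<in> S then f y else 0)) = (\<Sum>y\<in>S. f y)" for f
      unfolding Y_def using finS finR by (simp add: sum.inter_restrict[symmetric] Int_absorb1)
    have mom: "(\<Sum>y\<in>Y. \<nu> y * y ^ k) = (\<Sum>y\<in>R. w y * y ^ k) - (\<Sum>y\<in>S. u y * y ^ k)" for k
    proof -
      have "(\<Sum>y\<in>Y. \<nu> y * y ^ k) =
            (\<Sum>y\<in>Y. (if y \<in> R then w y * y ^ k else 0)) - (\<Sum>y\<in>Y. (if y \<in> S then u y * y ^ k else 0))"
        unfolding \<nu>_def sum_subtractf[symmetric] by (rule sum.cong) (auto simp: algebra_simps)
      then show ?thesis using sR[of "\<lambda>y. w y * y ^ k"] sS[of "\<lambda>y. u y * y ^ k"] by simp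
    qed
    have adm: "adm d S R Y \<nu>"
      unfolding adm_def
    proof (intro conjI ballI allI impI)
      show "finite Y" by (rule finY)
      show "Y \<subseteq> S \<union> R" unfolding Y_def by simp
    next
      fix y assume "y \<in> Y" "\<nu> y > 0"
      then show "y \<in> R" unfolding \<nu>_def using u(1) by (auto split: if_splits)
    next
      fix y assume "y \<in> Y" "\<nu> y < 0"
      then show "y \<in> S" unfolding \<nu>_def using w(1) by (auto split: if_splits)
    next
      fix k :: nat assume k: "k \<le> d"
      show "(\<Sum>y\<in>Y. \<nu> y * y ^ k) = 0"
      proof (cases "k = 0")
        case True then show ?thesis using mom[of 0] u(2) w(2) by simp
      next
        case False
        have "p k = p k" ..
        then have "(\<Sum>s\<in>R. w s * s ^ k) = (\<Sum>s\<in>S. u s * s ^ k)"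
          using u(3) w(3) k False by (metis (no_types, lifting) gamma_sum One_nat_def
              Suc_leI neq0_conv)
        then show ?thesis using mom by simp
      qed
    qed
    moreover have "\<exists>y\<in>Y. \<nu> y \<noteq> 0"
    proof (rule ccontr)
      assume "\<not> (\<exists>y\<in>Y. \<nu> y \<noteq> 0)"
      then have z0: "\<forall>y\<in>S \<union> R. \<nu> y = 0" unfolding Y_def by auto
      have z: "\<forall>y\<in>R - S. w y = 0"
      proof
        fix y assume "y \<in> R - S"
        then show "w y = 0" using z0[rule_format, of y] unfolding \<nu>_def by simp
      qed
      have sw: "(\<Sum>s\<in>S \<inter> R. w s * f s) = (\<Sum>s\<in>R. w s * f s)" for f
        by (rule sum.mono_neutral_left[OF finR]) (use z in auto)
      have "p \<in> conv (gamma d ` (S \<inter> R))"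
        unfolding conv_img[OF inj, of "S \<inter> R", OF finite_Int[OF disjI1[OF finS]]]
      proof (intro CollectI exI[of _ w] conjI)
        show "\<forall>s\<in>S \<inter> R. 0 \<le> w s" using w(1) by simp
        show "sum w (S \<inter> R) = 1" using sw[of "\<lambda>_. 1"] w(2) by simp
        show "p = (\<lambda>i. \<Sum>s\<in>S \<inter> R. w s * gamma d s i)"
          unfolding w(3) by (rule ext) (rule sw[symmetric])
      qed
      then show False using p(3) by simp
    qed
    ultimately show ?thesis by blast
  qed
  show "\<forall>Y \<nu>. adm d S R Y \<nu> \<longrightarrow> (\<Sum>y\<in>Y. \<nu> y * y ^ (d + 1)) \<ge> 0"
  proof (intro allI impI)
    fix Y \<nu> assume a: "adm d S R Y \<nu>"
    then have finY: "finite Y" and YSR: "Y \<subseteq> S \<union> R"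
      and sg: "\<forall>y\<in>Y. (\<nu> y > 0 \<longrightarrow> y \<in> R) \<and> (\<nu> y < 0 \<longrightarrow> y \<in> S)"
      and mom: "\<forall>k\<le>d. (\<Sum>y\<in>Y. \<nu> y * y ^ k) = 0"
      unfolding adm_def by auto
    define pp where "pp y = max (\<nu> y) 0" for y
    define nn where "nn y = max (- \<nu> y) 0" for y
    have nu_eq: "\<nu> y = pp y - nn y" for y unfolding pp_def nn_def by auto
    have pp0: "pp y \<ge> 0" "nn y \<ge> 0" for y unfolding pp_def nn_def by auto
    define W where "W = sum pp Y"
    have momk: "(\<Sum>y\<in>Y. pp y * y ^ k) = (\<Sum>y\<in>Y. nn y * y ^ k)" if "k \<le> d" for k
    proof -
      have "(\<Sum>y\<in>Y. pp y * y ^ k) - (\<Sum>y\<in>Y. nn y * y ^ k) = (\<Sum>y\<in>Y. \<nu> y * y ^ k)"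
        unfolding sum_subtractf[symmetric] nu_eq by (simp add: algebra_simps)
      then show ?thesis using mom that by simp
    qed
    have WN: "sum nn Y = W" unfolding W_def using momk[of 0] by simp
    show "(\<Sum>y\<in>Y. \<nu> y * y ^ (d + 1)) \<ge> 0"
    proof (cases "W = 0")
      case True
      then have "\<forall>y\<in>Y. pp y = 0" unfolding W_def using finY pp0 by (simp add: sum_nonneg_eq_0_iff)
      moreover have "\<forall>y\<in>Y. nn y = 0" using True WN finY pp0 by (simp add: sum_nonneg_eq_0_iff)
      ultimately have "\<forall>y\<in>Y. \<nu> y = 0" using nu_eq by simp
      then show ?thesis by simp
    next
      case False
      moreover have "W \<ge> 0" unfolding W_def using pp0 by (simp add: sum_nonneg)
      ultimately have Wpos: "W > 0" by simp
      define u where "u s = (if s \<in> Y then nn s / W else 0)" for s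
      define w where "w s = (if s \<in> Y then pp s / W else 0)" for s
      have nnS: "\<forall>y\<in>Y - S. nn y = 0" using sg unfolding nn_def by force
      have ppR: "\<forall>y\<in>Y - R. pp y = 0" using sg unfolding pp_def by force
      have sumS: "(\<Sum>s\<in>S. u s * f s) = (\<Sum>y\<in>Y. nn y * f y) / W" for f
      proof -
        have "(\<Sum>s\<in>S. u s * f s) = (\<Sum>s\<in>S. (if s \<in> Y then nn s * f s / W else 0))"
          unfolding u_def by (rule sum.cong) auto
        also have "\<dots> = (\<Sum>y\<in>Y. nn y * f y / W)"
          by (rule sum_restrict[OF finS finY]) (use nnS in auto)
        finally show ?thesis by (simp add: sum_divide_distrib)
      qed
      have sumR: "(\<Sum>s\<in>R. w s * f s) = (\<Sum>y\<in>Y. pp y * f y) / W" for f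
      proof -
        have "(\<Sum>s\<in>R. w s * f s) = (\<Sum>s\<in>R. (if s \<in> Y then pp s * f s / W else 0))"
          unfolding w_def by (rule sum.cong) auto
        also have "\<dots> = (\<Sum>y\<in>Y. pp y * f y / W)"
          by (rule sum_restrict[OF finR finY]) (use ppR in auto)
        finally show ?thesis by (simp add: sum_divide_distrib)
      qed
      have u1: "\<forall>s\<in>S. 0 \<le> u s" "sum u S = 1"
        using sumS[of "\<lambda>_. 1"] WN Wpos pp0 unfolding u_def by auto
      have w1: "\<forall>s\<in>R. 0 \<le> w s" "sum w R = 1"
        using sumR[of "\<lambda>_. 1"] Wpos pp0 unfolding w_def W_def by auto
      define p where "p = (\<lambda>i. \<Sum>s\<in>S. u s * gamma d s i)"
      have pR: "p = (\<lambda>i. \<Sum>s\<in>R. w s * gamma d s i)"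
        unfolding p_def gamma_sum
      proof (rule ext)
        fix i
        show "(if 1 \<le> i \<and> i \<le> d then \<Sum>s\<in>S. u s * s ^ i else 0) =
              (if 1 \<le> i \<and> i \<le> d then \<Sum>s\<in>R. w s * s ^ i else 0)"
          using sumS[of "\<lambda>s. s ^ i"] sumR[of "\<lambda>s. s ^ i"] momk[of i] by auto
      qed
      have "p \<in> conv (gamma d ` S)" unfolding cS' p_def using u1 by blast
      moreover have "p \<in> conv (gamma d ` R)" unfolding cR' pR using w1 by blast
      ultimately have "height d (gamma d ` S) p \<le> height d (gamma d ` R) p" using hle by blast
      moreover have "height d (gamma d ` S) p = (\<Sum>s\<in>S. u s * s ^ (d + 1))"
        unfolding p_def by (rule height_eq[OF d finS cS u1])
      moreover have "height d (gamma d ` R) p = (\<Sum>s\<in>R. w s * s ^ (d + 1))"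
        unfolding pR by (rule height_eq[OF d finR cR w1])
      ultimately have "(\<Sum>y\<in>Y. nn y * y ^ (d + 1)) / W \<le> (\<Sum>y\<in>Y. pp y * y ^ (d + 1)) / W"
        using sumS sumR by simp
      then have "(\<Sum>y\<in>Y. nn y * y ^ (d + 1)) \<le> (\<Sum>y\<in>Y. pp y * y ^ (d + 1))"
        using Wpos by (simp add: divide_right_mono_neg divide_le_cancel)
      moreover have "(\<Sum>y\<in>Y. \<nu> y * y ^ (d + 1)) =
          (\<Sum>y\<in>Y. pp y * y ^ (d + 1)) - (\<Sum>y\<in>Y. nn y * y ^ (d + 1))"
        unfolding sum_subtractf[symmetric] nu_eq by (simp add: algebra_simps)
      ultimately show ?thesis by simp
    qed
  qed
qed


definition lexless :: "(real \<Rightarrow> int) \<Rightarrow> (real \<Rightarrow> int) \<Rightarrow> bool" where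
  "lexless f g \<longleftrightarrow> (\<exists>a. f a < g a \<and> (\<forall>x>a. f x = g x))"

definition sgnf :: "real set \<Rightarrow> real \<Rightarrow> int" where
  "sgnf S x = (if x \<in> S then (-1) ^ card {y\<in>S. x < y} else 0)"

lemma neg1_pow_cases: "((-1::'a::ring_1) ^ n = 1 \<and> even n) \<or> ((-1::'a) ^ n = -1 \<and> odd n)"
  by (cases "even n") auto

lemma main_param:
  fixes S R :: "real set"
  assumes finS: "finite S" and finR: "finite R"
    and cS: "card S \<le> Suc d" and cR: "card R \<le> Suc d"
    and E1: "\<exists>Y \<nu>. adm d S R Y \<nu> \<and> (\<exists>y\<in>Y. \<nu> y \<noteq> 0)"
    and E2: "\<forall>Y \<nu>. adm d S R Y \<nu> \<longrightarrow> (\<Sum>y\<in>Y. \<nu> y * y ^ (d + 1)) \<ge> 0"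
  shows "lexless (sgnf S) (sgnf R)"
proof -
  obtain Y \<nu> where adm: "adm d S R Y \<nu>" and nz: "\<exists>y\<in>Y. \<nu> y \<noteq> 0" using E1 by blast
  have finY: "finite Y" and YSR: "Y \<subseteq> S \<union> R"
    and sg: "\<forall>y\<in>Y. (\<nu> y > 0 \<longrightarrow> y \<in> R) \<and> (\<nu> y < 0 \<longrightarrow> y \<in> S)"
    and mom: "\<forall>k\<le>d. (\<Sum>y\<in>Y. \<nu> y * y ^ k) = 0"
    using adm unfolding adm_def by auto
  define V where "V = {y\<in>Y. \<nu> y \<noteq> 0}"
  have finV: "finite V" unfolding V_def using finY by simp
  have neV: "V \<noteq> {}" unfolding V_def using nz by auto
  have nzV: "\<forall>x\<in>V. \<nu> x \<noteq> 0" unfolding V_def by simp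
  have VU: "V \<subseteq> S \<union> R" unfolding V_def using YSR by auto
  have sgV: "\<nu> y > 0 \<Longrightarrow> y \<in> R" "\<nu> y < 0 \<Longrightarrow> y \<in> S" if "y \<in> V" for y
    using sg that unfolding V_def by auto
  have momV: "\<forall>k\<le>d. (\<Sum>x\<in>V. \<nu> x * x ^ k) = 0"
  proof (intro allI impI)
    fix k assume "k \<le> d"
    have "(\<Sum>x\<in>V. \<nu> x * x ^ k) = (\<Sum>x\<in>Y. \<nu> x * x ^ k)"
      by (rule sum.mono_neutral_left[OF finY]) (auto simp: V_def)
    then show "(\<Sum>x\<in>V. \<nu> x * x ^ k) = 0" using mom \<open>k \<le> d\<close> by simp
  qed
  obtain c where ch: "chain \<nu> V c (Suc (Suc d))"
    using chain_exists[OF finV neV nzV momV] by blast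
  have cV: "c i \<in> V" if "i < Suc (Suc d)" for i using ch that unfolding chain_def by auto
  have cstep: "c (Suc i) < c i \<and> \<nu> (c i) * \<nu> (c (Suc i)) < 0" if "Suc i < Suc (Suc d)" for i
    using ch that unfolding chain_def by auto
  have cinj: "inj_on c {..<Suc (Suc d)}" by (rule chain_inj[OF ch])
  have SneR: "S \<noteq> R"
  proof
    assume "S = R"
    then have "V \<subseteq> S" using VU by simp
    then have "card V \<le> card S" using finS by (simp add: card_mono)
    moreover have "Suc (Suc d) \<le> card V" by (rule chain_card[OF ch finV])
    ultimately show False using cS by simp
  qed
  define Dl where "Dl = (S - R) \<union> (R - S)"
  have finDl: "finite Dl" "Dl \<noteq> {}" unfolding Dl_def using finS finR SneR by auto
  define xs where "xs = Max Dl"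
  have xsD: "xs \<in> Dl" unfolding xs_def using finDl by simp
  have xs_max: "y \<le> xs" if "y \<in> Dl" for y unfolding xs_def using finDl that by simp
  define U where "U = S \<union> R"
  define T where "T = {y\<in>U. xs < y}"
  have finT: "finite T" unfolding T_def U_def using finS finR by simp
  have TSR: "T \<subseteq> S \<inter> R"
  proof
    fix y assume "y \<in> T"
    then have "y \<in> U" "xs < y" unfolding T_def by auto
    then have "y \<notin> Dl" using xs_max by force
    then show "y \<in> S \<inter> R" using \<open>y \<in> U\<close> unfolding U_def Dl_def by auto
  qed
  have xsT: "xs \<notin> T" unfolding T_def by simp
  have TS: "{y\<in>S. xs < y} = T" using TSR unfolding T_def U_def by blast
  have TR: "{y\<in>R. xs < y} = T" using TSR unfolding T_def U_def by blast
  have above: "\<forall>x>xs. sgnf S x = sgnf R x"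
  proof (intro allI impI)
    fix x assume x: "xs < x"
    have mem: "z \<in> S \<longleftrightarrow> z \<in> R" if "xs < z" for z
      using xs_max[of z] that unfolding Dl_def by auto
    have "{y\<in>S. x < y} = {y\<in>R. x < y}" using mem x by auto
    then show "sgnf S x = sgnf R x" unfolding sgnf_def using mem[OF x] by simp
  qed
  define t where "t = card T"
  have t_le: "t \<le> d"
  proof -
    have "insert xs T \<subseteq> S \<or> insert xs T \<subseteq> R" using xsD TSR unfolding Dl_def by auto
    then have "card (insert xs T) \<le> Suc d"
      using finS finR cS cR by (meson card_mono order_trans)
    then show ?thesis using finT xsT unfolding t_def by simp
  qed
  have "sgnf S xs < sgnf R xs"
  proof (rule ccontr)
    assume nl: "\<not> sgnf S xs < sgnf R xs"
    define m :: real where "m = (if xs \<in> R then 1 else -1)"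
    define et :: real where "et = (-1) ^ t"
    have etet: "et * et = 1" unfolding et_def by (simp add: power_mult_distrib[symmetric])
    have bad: "m * et = -1"
    proof (cases "xs \<in> R")
      case True
      then have "xs \<notin> S" using xsD unfolding Dl_def by auto
      then have "\<not> (0 < (-1::int) ^ t)" using nl True unfolding sgnf_def TR t_def by simp
      then have "odd t" using neg1_pow_cases[of t] by auto
      then show ?thesis unfolding m_def et_def using True by simp
    next
      case False
      then have "xs \<in> S" using xsD unfolding Dl_def by auto
      then have "\<not> ((-1::int) ^ t < 0)" using nl False unfolding sgnf_def TS t_def by simp
      then have "even t" using neg1_pow_cases[of t] by auto
      then show ?thesis unfolding m_def et_def using False by simp
    qed
    have exi: "\<exists>i. i < Suc (Suc d) \<and> c i \<le> xs"
    proof (rule ccontr)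
      assume "\<not> ?thesis"
      then have "c ` {..<Suc (Suc d)} \<subseteq> T"
        using cV VU unfolding T_def U_def by force
      then have "card (c ` {..<Suc (Suc d)}) \<le> t" unfolding t_def using finT by (simp add: card_mono)
      moreover have "card (c ` {..<Suc (Suc d)}) = Suc (Suc d)" using cinj by (simp add: card_image)
      ultimately show False using t_le by simp
    qed
    define k where "k = (LEAST i. i < Suc (Suc d) \<and> c i \<le> xs)"
    have k: "k < Suc (Suc d)" "c k \<le> xs" unfolding k_def using LeastI_ex[OF exi] by auto
    have k_above: "xs < c i" if "i < k" for i
      using not_less_Least[of i "\<lambda>i. i < Suc (Suc d) \<and> c i \<le> xs"] that k(1)
      unfolding k_def[symmetric] by auto
    have k_le: "k \<le> t"
    proof -
      have "c ` {..<k} \<subseteq> T"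
      proof
        fix y assume "y \<in> c ` {..<k}"
        then obtain i where i: "i < k" "y = c i" by auto
        then have "c i \<in> V" using cV k(1) by simp
        then show "y \<in> T" using k_above[OF i(1)] i(2) VU unfolding T_def U_def by auto
      qed
      then have "card (c ` {..<k}) \<le> t" unfolding t_def using finT by (simp add: card_mono)
      moreover have "inj_on c {..<k}" by (rule inj_on_subset[OF cinj]) (use k(1) in auto)
      ultimately show ?thesis by (simp add: card_image)
    qed
    define j where "j = (if c k < xs \<and> \<nu> (c k) * m < 0 then k else Suc k)"
    define n where "n = d + 1 - t"
    define L where "L i = c (j + i)" for i
    have j_le: "j \<le> Suc k" unfolding j_def by simp
    have Lidx: "j + i < Suc (Suc d)" if "i < n" for i using that j_le k_le t_le unfolding n_def by linarith
    have LV: "L i \<in> V" if "i < n" for i unfolding L_def using cV Lidx that by simp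
    have Lmono: "L i' < L i" if "i < i'" "i' < n" for i i'
      unfolding L_def using chain_mono[OF ch, of "j + i" "j + i'"] that Lidx by simp
    have Lbelow: "L i < xs" if "i < n" for i
    proof (cases "j = k")
      case True
      show ?thesis
      proof (cases "i = 0")
        case True
        then show ?thesis using \<open>j = k\<close> unfolding L_def j_def by (auto split: if_splits)
      next
        case False
        then have "c (j + i) < c k" using chain_mono[OF ch, of k "j + i"] Lidx[OF that] \<open>j = k\<close> by simp
        then show ?thesis using k(2) unfolding L_def by simp
      qed
    next
      case False
      then have "j = Suc k" unfolding j_def by (simp split: if_splits)
      then have "c (j + i) < c k" using chain_mono[OF ch, of k "j + i"] Lidx[OF that] by simp
      then show ?thesis using k(2) unfolding L_def by simp
    qed
    have L0: "\<nu> (L 0) * m < 0"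
    proof (cases "c k < xs \<and> \<nu> (c k) * m < 0")
      case True then show ?thesis unfolding L_def j_def by simp
    next
      case False
      then have jk: "j = Suc k" unfolding j_def by simp
      have n1: "0 < n" unfolding n_def using t_le by simp
      have kd: "Suc k < Suc (Suc d)" using Lidx[OF n1] jk by simp
      have ckV: "c k \<in> V" using cV k(1) by simp
      have pos: "\<nu> (c k) * m > 0"
      proof (cases "c k = xs")
        case True
        show ?thesis
        proof (cases "xs \<in> R")
          case True
          then have "xs \<notin> S" using xsD unfolding Dl_def by auto
          then have "\<not> \<nu> xs < 0" using sgV(2)[OF ckV] \<open>c k = xs\<close> by auto
          then have "\<nu> xs > 0" using nzV ckV \<open>c k = xs\<close> by force
          then show ?thesis using True \<open>c k = xs\<close> unfolding m_def by simp
        next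
          case False
          then have "\<not> \<nu> xs > 0" using sgV(1)[OF ckV] \<open>c k = xs\<close> by auto
          then have "\<nu> xs < 0" using nzV ckV \<open>c k = xs\<close> by force
          then show ?thesis using False \<open>c k = xs\<close> unfolding m_def by simp
        qed
      next
        case False
        then have "c k < xs" using k(2) by simp
        then have "\<not> \<nu> (c k) * m < 0" using \<open>\<not> (c k < xs \<and> \<nu> (c k) * m < 0)\<close> by simp
        moreover have "\<nu> (c k) * m \<noteq> 0" using nzV ckV unfolding m_def by simp
        ultimately show ?thesis by linarith
      qed
      have "\<nu> (c k) * \<nu> (c (Suc k)) < 0" using cstep[OF kd] by simp
      then have "\<nu> (c (Suc k)) * m < 0"
        using sgn_helper2[of m "\<nu> (c k)" "\<nu> (c (Suc k))"] pos by (simp add: mult.commute)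
      then show ?thesis unfolding L_def jk by simp
    qed
    have Lsign: "\<nu> (L i) * m * (-1) ^ i < 0" if "i < n" for i
      using that
    proof (induction i)
      case 0 then show ?case using L0 by simp
    next
      case (Suc i)
      have IH: "\<nu> (L i) * m * (-1) ^ i < 0" using Suc by simp
      have "\<nu> (L i) * \<nu> (L (Suc i)) < 0"
        using cstep[of "j + i"] Lidx[OF Suc.prems] unfolding L_def by simp
      then have "\<nu> (L (Suc i)) * (m * (-1) ^ i) > 0"
        using IH by (auto simp: mult_less_0_iff zero_less_mult_iff)
      then show ?case by (simp add: mult_ac)
    qed
    define Z where "Z = T \<union> {xs} \<union> L ` {..<n}"
    have Linj: "inj_on L {..<n}"
    proof (rule inj_onI)
      fix a b assume "a \<in> {..<n}" "b \<in> {..<n}" "L a = L b"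
      then show "a = b" using Lmono[of a b] Lmono[of b a] by (cases a b rule: linorder_cases) auto
    qed
    have finZ: "finite Z" unfolding Z_def using finT by simp
    have Tgt: "xs < y" if "y \<in> T" for y using that unfolding T_def by simp
    have cardZ: "card Z = Suc (d + 1)"
    proof -
      have d1: "(T \<union> {xs}) \<inter> L ` {..<n} = {}" using Lbelow Tgt by force
      have "card Z = card (T \<union> {xs}) + card (L ` {..<n})"
        unfolding Z_def by (rule card_Un_disjoint) (use finT d1 in auto)
      also have "card (T \<union> {xs}) = Suc t" using finT xsT unfolding t_def by simp
      also have "card (L ` {..<n}) = n" using Linj by (simp add: card_image)
      finally show ?thesis unfolding n_def using t_le by simp
    qed
    have above_xs: "{w\<in>Z. xs < w} = T"
    proof -
      have "\<forall>i<n. \<not> xs < L i" using Lbelow by (meson order.asym)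
      then show ?thesis unfolding Z_def using Tgt by auto
    qed
    have above_L: "{w\<in>Z. L i < w} = T \<union> {xs} \<union> L ` {..<i}" if "i < n" for i
    proof (intro set_eqI iffI)
      fix w assume "w \<in> {w\<in>Z. L i < w}"
      then have w: "w \<in> Z" "L i < w" by auto
      show "w \<in> T \<union> {xs} \<union> L ` {..<i}"
      proof (cases "w \<in> L ` {..<n}")
        case True
        then obtain i' where i': "i' < n" "w = L i'" by auto
        have "i' < i"
        proof (rule ccontr)
          assume "\<not> i' < i"
          then have "i = i' \<or> i < i'" by auto
          then show False using Lmono[of i i'] i' w(2) by auto
        qed
        then show ?thesis using i' by auto
      next
        case False then show ?thesis using w(1) unfolding Z_def by auto
      qed
    next
      fix w assume w: "w \<in> T \<union> {xs} \<union> L ` {..<i}"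
      then have "w \<in> Z" unfolding Z_def using that by auto
      moreover have "L i < w"
      proof -
        consider "w \<in> T" | "w = xs" | "w \<in> L ` {..<i}" using w by blast
        then show ?thesis
        proof cases
          case 1 then show ?thesis using Lbelow[OF that] Tgt[of w] by simp
        next
          case 2 then show ?thesis using Lbelow[OF that] by simp
        next
          case 3 then show ?thesis using Lmono that by auto
        qed
      qed
      ultimately show "w \<in> {w\<in>Z. L i < w}" by simp
    qed
    have card_above_L: "card {w\<in>Z. L i < w} = t + 1 + i" if "i < n" for i
    proof -
      have "\<forall>i'\<in>{..<i}. L i' < xs" using Lbelow that by auto
      then have lt: "\<forall>y\<in>L ` {..<i}. y < xs" by auto
      have d1: "(T \<union> {xs}) \<inter> L ` {..<i} = {}"
      proof (rule equals0I)
        fix y assume "y \<in> (T \<union> {xs}) \<inter> L ` {..<i}"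
        then have "y < xs" "y \<in> T \<or> y = xs" using lt by auto
        then show False using Tgt[of y] by auto
      qed
      have "card (T \<union> {xs} \<union> L ` {..<i}) = card (T \<union> {xs}) + card (L ` {..<i})"
        by (rule card_Un_disjoint) (use finT d1 in auto)
      also have "card (T \<union> {xs}) = Suc t" using finT xsT unfolding t_def by simp
      also have "card (L ` {..<i}) = i"
        using inj_on_subset[OF Linj, of "{..<i}"] that by (simp add: card_image)
      finally show ?thesis using above_L[OF that] by simp
    qed
    define Dz where "Dz z = (\<Prod>w\<in>Z-{z}. z - w)" for z
    define \<nu>' where "\<nu>' z = - 1 / Dz z" for z
    have signD: "(-1) ^ card {w\<in>Z. z < w} * Dz z > 0" if "z \<in> Z" for z
      unfolding Dz_def by (rule sign_D[OF finZ that])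
    have momZ: "(\<Sum>z\<in>Z. \<nu>' z * z ^ k) = - (if k = d + 1 then 1 else 0)" if "k \<le> d + 1" for k
    proof -
      have "(\<Sum>z\<in>Z. \<nu>' z * z ^ k) = - (\<Sum>z\<in>Z. z ^ k / Dz z)"
        unfolding \<nu>'_def by (simp add: sum_negf[symmetric])
      also have "(\<Sum>z\<in>Z. z ^ k / Dz z) = (if k = d + 1 then 1 else 0)"
        unfolding Dz_def by (rule divdiff_moment[OF finZ cardZ that])
      finally show ?thesis .
    qed
    have admZ: "adm d S R Z \<nu>'"
      unfolding adm_def
    proof (intro conjI ballI allI impI)
      show "finite Z" by (rule finZ)
      show "Z \<subseteq> S \<union> R" unfolding Z_def using TSR xsD LV VU unfolding Dl_def by auto
    next
      fix k :: nat assume "k \<le> d"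
      then show "(\<Sum>z\<in>Z. \<nu>' z * z ^ k) = 0" using momZ[of k] by simp
    next
      fix z assume zZ: "z \<in> Z"
      have "(z \<in> T) \<or> z = xs \<or> (\<exists>i<n. z = L i)" using zZ unfolding Z_def by auto
      then have "(\<nu>' z > 0 \<longrightarrow> z \<in> R) \<and> (\<nu>' z < 0 \<longrightarrow> z \<in> S)"
      proof (elim disjE exE conjE)
        assume "z \<in> T" then show ?thesis using TSR by auto
      next
        assume zx: "z = xs"
        have A: "et * Dz xs > 0" using signD[of xs] zZ zx above_xs unfolding et_def t_def by simp
        have "m * Dz xs = (et * Dz xs) * (m * et)" using etet by (simp add: algebra_simps)
        then have mD: "m * Dz xs < 0" using A bad by simp
        have Dnz: "Dz xs \<noteq> 0" using A by auto
        have DD: "Dz xs * Dz xs > 0" using Dnz by (metis not_real_square_gt_zero)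
        have e: "m / Dz xs = (m * Dz xs) / (Dz xs * Dz xs)" using Dnz by (simp add: field_simps)
        have "m / Dz xs < 0" unfolding e by (rule divide_neg_pos[OF mD DD])
        moreover have "\<nu>' xs * m = - (m / Dz xs)" unfolding \<nu>'_def by simp
        ultimately have pos: "\<nu>' xs * m > 0" by simp
        show ?thesis
        proof (intro conjI impI)
          assume "\<nu>' z > 0"
          then have "m > 0" using pos zx by (simp add: zero_less_mult_iff)
          then show "z \<in> R" using zx unfolding m_def by (simp split: if_splits)
        next
          assume "\<nu>' z < 0"
          then have "m < 0" using pos zx by (simp add: zero_less_mult_iff)
          then have "xs \<notin> R" unfolding m_def by (simp split: if_splits)
          then show "z \<in> S" using zx xsD unfolding Dl_def by auto
        qed
      next
        fix i assume i: "i < n" and zi: "z = L i"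
        define ei :: real where "ei = (-1) ^ i"
        have eiei: "ei * ei = 1" unfolding ei_def by (simp add: power_mult_distrib[symmetric])
        have "(-1::real) ^ (t + 1 + i) = - et * ei" unfolding et_def ei_def by (simp add: power_add)
        then have A: "(- et * ei) * Dz (L i) > 0"
          using signD[of "L i"] zZ zi card_above_L[OF i] by simp
        have B: "\<nu> (L i) * m * ei < 0" using Lsign[OF i] unfolding ei_def .
        have "\<nu> (L i) * Dz (L i) = (\<nu> (L i) * m * ei) * ((- et * ei) * Dz (L i))"
        proof -
          have "(\<nu> (L i) * m * ei) * ((- et * ei) * Dz (L i)) =
                \<nu> (L i) * Dz (L i) * (- (m * et)) * (ei * ei)" by (simp add: algebra_simps)
          then show ?thesis using bad eiei by simp
        qed
        moreover have "(\<nu> (L i) * m * ei) * ((- et * ei) * Dz (L i)) < 0" by (rule mult_neg_pos[OF B A])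
        ultimately have nD: "\<nu> (L i) * Dz (L i) < 0" by simp
        have Dnz: "Dz (L i) \<noteq> 0" using A by auto
        have DD: "Dz (L i) * Dz (L i) > 0" using Dnz by (metis not_real_square_gt_zero)
        have e: "\<nu> (L i) / Dz (L i) = (\<nu> (L i) * Dz (L i)) / (Dz (L i) * Dz (L i))"
          using Dnz by (simp add: field_simps)
        have "\<nu> (L i) / Dz (L i) < 0" unfolding e by (rule divide_neg_pos[OF nD DD])
        moreover have "\<nu>' (L i) * \<nu> (L i) = - (\<nu> (L i) / Dz (L i))" unfolding \<nu>'_def by simp
        ultimately have pos: "\<nu>' (L i) * \<nu> (L i) > 0" by simp
        have LiV: "L i \<in> V" using LV[OF i] .
        show ?thesis
        proof (intro conjI impI)
          assume "\<nu>' z > 0"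
          then have "\<nu> (L i) > 0" using pos zi by (simp add: zero_less_mult_iff)
          then show "z \<in> R" using sgV(1)[OF LiV] zi by simp
        next
          assume "\<nu>' z < 0"
          then have "\<nu> (L i) < 0" using pos zi by (simp add: zero_less_mult_iff)
          then show "z \<in> S" using sgV(2)[OF LiV] zi by simp
        qed
      qed
      then show "\<nu>' z > 0 \<Longrightarrow> z \<in> R" "\<nu>' z < 0 \<Longrightarrow> z \<in> S" by auto
    qed
    have "(\<Sum>z\<in>Z. \<nu>' z * z ^ (d + 1)) \<ge> 0" using E2 admZ by blast
    moreover have "(\<Sum>z\<in>Z. \<nu>' z * z ^ (d + 1)) = -1" using momZ[of "d + 1"] by simp
    ultimately show False by simp
  qed
  then show ?thesis unfolding lexless_def using above by blast
qed


lemma lexless_trans: "lexless f g \<Longrightarrow> lexless g h \<Longrightarrow> lexless f h"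
proof -
  assume "lexless f g" "lexless g h"
  then obtain a b where a: "f a < g a" "\<forall>x>a. f x = g x" and b: "g b < h b" "\<forall>x>b. g x = h x"
    unfolding lexless_def by blast
  show "lexless f h" unfolding lexless_def
  proof (cases a b rule: linorder_cases)
    case less
    then show "\<exists>a. f a < h a \<and> (\<forall>x>a. f x = h x)"
      using a b by (intro exI[of _ b]) auto
  next
    case equal
    then show "\<exists>a. f a < h a \<and> (\<forall>x>a. f x = h x)"
      using a b by (intro exI[of _ b]) auto
  next
    case greater
    then show "\<exists>a. f a < h a \<and> (\<forall>x>a. f x = h x)"
      using a b by (intro exI[of _ a]) auto
  qed
qed

lemma lexless_irrefl: "\<not> lexless f f"
  unfolding lexless_def by auto

lemma key:
  assumes d: "d \<ge> 1" and s: "\<sigma> \<in> simplices d" and t: "\<tau> \<in> simplices d"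
    and b: "below d \<sigma> \<tau>"
  shows "lexless (sgnf (pset d \<sigma>)) (sgnf (pset d \<tau>))"
proof -
  note ps = simplex_param[OF d s] and pt = simplex_param[OF d t]
  have b': "below d (gamma d ` pset d \<sigma>) (gamma d ` pset d \<tau>)" using b ps(2) pt(2) by simp
  show ?thesis
    by (rule main_param[OF ps(1) pt(1) ps(3) pt(3) below_adm(1)[OF d ps(1) pt(1) ps(3) pt(3) b']
          below_adm(2)[OF d ps(1) pt(1) ps(3) pt(3) b']])
qed

lemma tr_lex:
  assumes d: "d \<ge> 1"
    and "tranclp (\<lambda>a b. a \<in> simplices d \<and> b \<in> simplices d \<and> below d a b) \<sigma> \<tau>"
  shows "lexless (sgnf (pset d \<sigma>)) (sgnf (pset d \<tau>))"
  using assms(2)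
proof (induction rule: tranclp_induct)
  case (base y)
  then show ?case using key[OF d] by blast
next
  case (step y z)
  then show ?case using key[OF d] lexless_trans by blast
qed

theorem lemma2p7:
  fixes d :: nat
  assumes "d \<ge> 1"
  shows "partial_order_on (simplices d)
           {(\<sigma>, \<tau>). \<sigma> \<in> simplices d \<and> \<tau> \<in> simplices d \<and> preceq d \<sigma> \<tau>}"
  unfolding partial_order_on_def preorder_on_def
proof (intro conjI)
  show "refl_on (simplices d) {(\<sigma>, \<tau>). \<sigma> \<in> simplices d \<and> \<tau> \<in> simplices d \<and> preceq d \<sigma> \<tau>}"
    by (rule refl_onI) (auto simp: preceq_def)
  show "trans {(\<sigma>, \<tau>). \<sigma> \<in> simplices d \<and> \<tau> \<in> simplices d \<and> preceq d \<sigma> \<tau>}"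
  proof (rule transI)
    fix x y z
    assume "(x, y) \<in> {(\<sigma>, \<tau>). \<sigma> \<in> simplices d \<and> \<tau> \<in> simplices d \<and> preceq d \<sigma> \<tau>}"
      "(y, z) \<in> {(\<sigma>, \<tau>). \<sigma> \<in> simplices d \<and> \<tau> \<in> simplices d \<and> preceq d \<sigma> \<tau>}"
    then show "(x, z) \<in> {(\<sigma>, \<tau>). \<sigma> \<in> simplices d \<and> \<tau> \<in> simplices d \<and> preceq d \<sigma> \<tau>}"
      unfolding preceq_def by (auto intro: tranclp_trans)
  qed
  show "antisym {(\<sigma>, \<tau>). \<sigma> \<in> simplices d \<and> \<tau> \<in> simplices d \<and> preceq d \<sigma> \<tau>}"
  proof (rule antisymI)
    fix x y
    assume "(x, y) \<in> {(\<sigma>, \<tau>). \<sigma> \<in> simplices d \<and> \<tau> \<in> simplices d \<and> preceq d \<sigma> \<tau>}"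
      "(y, x) \<in> {(\<sigma>, \<tau>). \<sigma> \<in> simplices d \<and> \<tau> \<in> simplices d \<and> preceq d \<sigma> \<tau>}"
    then have p: "preceq d x y" "preceq d y x" by auto
    show "x = y"
    proof (rule ccontr)
      assume "x \<noteq> y"
      then have "tranclp (\<lambda>a b. a \<in> simplices d \<and> b \<in> simplices d \<and> below d a b) x y"
        "tranclp (\<lambda>a b. a \<in> simplices d \<and> b \<in> simplices d \<and> below d a b) y x"
        using p unfolding preceq_def by auto
      then have "tranclp (\<lambda>a b. a \<in> simplices d \<and> b \<in> simplices d \<and> below d a b) x x"
        by (rule tranclp_trans)
      then show False using tr_lex[OF assms] lexless_irrefl by blast
    qed
  qed
  show "{(\<sigma>, \<tau>). \<sigma> \<in> simplices d \<and> \<tau> \<in> simplices d \<and> preceq d \<sigma> \<tau>}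
     \<subseteq> simplices d \<times> simplices d" by auto
qed

end
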